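(* Let $G$ be a connected graph with $|V(G)|=(\Delta(G)+1)(\gamma(G)-1)+1\geq 4$. If $G$ is a vertex domination-critical graph, then $G$ is regular, and $G$ is both a hypo-efficient domination graph and a hypo-unique domination graph.
   Context: All graphs are finite, simple and undirected. For $v\in V(G)$, $N[v]$ is the closed neighborhood of $v$. A set $D\subseteq V(G)$ is dominating if every vertex of $G$ not in $D$ has a neighbor in $D$; $\gamma(G)$ is the minimum size of a dominating set, and a dominating set of size $\gamma(G)$ is a $\gamma$-set. A vertex $v$ is $\gamma$-critical if $\gamma(G-v)<\gamma(G)$; $G$ is a vertex domination-critical graph if every vertex is $\gamma$-critical. A set $D\subseteq V(H)$ is an efficient dominating set (EDS) of $H$ if $|N_H[v]\cap D|=1$ for every $v\in V(H)$. $G$ is a hypo-efficient domination graph if $G$ has no EDS but $G-v$ has at least one EDS for every $v\in V(G)$. $G$ is a hypo-unique domination graph if $G$ has at least two $\gamma$-sets but $G-v$ has exactly one $\gamma$-set for every $v\in V(G)$. $\Delta(G)$ is the maximum degree. *)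

theory Defs
  imports Main
begin

text \<open>A finite simple graph is given by a finite vertex set V and a symmetric,
irreflexive adjacency relation E; only edges between vertices of V matter.
The vertex-deleted subgraph G - v is (V - {v}, E).\<close>

definition simple_graph :: "'a set \<Rightarrow> ('a \<Rightarrow> 'a \<Rightarrow> bool) \<Rightarrow> bool" where
  "simple_graph V E \<longleftrightarrow> finite V \<and> (\<forall>u v. E u v \<longrightarrow> E v u) \<and> (\<forall>v. \<not> E v v)"

definition nbhd :: "'a set \<Rightarrow> ('a \<Rightarrow> 'a \<Rightarrow> bool) \<Rightarrow> 'a \<Rightarrow> 'a set" where
  "nbhd V E v = {u \<in> V. E v u}"

definition closed_nbhd :: "'a set \<Rightarrow> ('a \<Rightarrow> 'a \<Rightarrow> bool) \<Rightarrow> 'a \<Rightarrow> 'a set" where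
  "closed_nbhd V E v = insert v (nbhd V E v)"

definition degree :: "'a set \<Rightarrow> ('a \<Rightarrow> 'a \<Rightarrow> bool) \<Rightarrow> 'a \<Rightarrow> nat" where
  "degree V E v = card (nbhd V E v)"

definition max_degree :: "'a set \<Rightarrow> ('a \<Rightarrow> 'a \<Rightarrow> bool) \<Rightarrow> nat" where
  "max_degree V E = Max (degree V E ` V)"

definition regular :: "'a set \<Rightarrow> ('a \<Rightarrow> 'a \<Rightarrow> bool) \<Rightarrow> bool" where
  "regular V E \<longleftrightarrow> (\<forall>u\<in>V. \<forall>v\<in>V. degree V E u = degree V E v)"

definition connected_graph :: "'a set \<Rightarrow> ('a \<Rightarrow> 'a \<Rightarrow> bool) \<Rightarrow> bool" where
  "connected_graph V E \<longleftrightarrow>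
     (\<forall>u\<in>V. \<forall>v\<in>V. (u, v) \<in> {(x, y). x \<in> V \<and> y \<in> V \<and> E x y}\<^sup>*)"

definition dominating :: "'a set \<Rightarrow> ('a \<Rightarrow> 'a \<Rightarrow> bool) \<Rightarrow> 'a set \<Rightarrow> bool" where
  "dominating V E D \<longleftrightarrow> D \<subseteq> V \<and> (\<forall>v\<in>V - D. \<exists>u\<in>D. E v u)"

definition domination_number :: "'a set \<Rightarrow> ('a \<Rightarrow> 'a \<Rightarrow> bool) \<Rightarrow> nat" where
  "domination_number V E = (LEAST k. \<exists>D. dominating V E D \<and> card D = k)"

definition gamma_set :: "'a set \<Rightarrow> ('a \<Rightarrow> 'a \<Rightarrow> bool) \<Rightarrow> 'a set \<Rightarrow> bool" where
  "gamma_set V E D \<longleftrightarrow> dominating V E D \<and> card D = domination_number V E"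

definition gamma_critical_vertex :: "'a set \<Rightarrow> ('a \<Rightarrow> 'a \<Rightarrow> bool) \<Rightarrow> 'a \<Rightarrow> bool" where
  "gamma_critical_vertex V E v \<longleftrightarrow> domination_number (V - {v}) E < domination_number V E"

definition vertex_domination_critical :: "'a set \<Rightarrow> ('a \<Rightarrow> 'a \<Rightarrow> bool) \<Rightarrow> bool" where
  "vertex_domination_critical V E \<longleftrightarrow> (\<forall>v\<in>V. gamma_critical_vertex V E v)"

definition efficient_dominating :: "'a set \<Rightarrow> ('a \<Rightarrow> 'a \<Rightarrow> bool) \<Rightarrow> 'a set \<Rightarrow> bool" where
  "efficient_dominating V E D \<longleftrightarrow> D \<subseteq> V \<and> (\<forall>v\<in>V. card (closed_nbhd V E v \<inter> D) = 1)"

definition has_EDS :: "'a set \<Rightarrow> ('a \<Rightarrow> 'a \<Rightarrow> bool) \<Rightarrow> bool" where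
  "has_EDS V E \<longleftrightarrow> (\<exists>D. efficient_dominating V E D)"

definition hypo_efficient_domination :: "'a set \<Rightarrow> ('a \<Rightarrow> 'a \<Rightarrow> bool) \<Rightarrow> bool" where
  "hypo_efficient_domination V E \<longleftrightarrow>
     \<not> has_EDS V E \<and> (\<forall>v\<in>V. has_EDS (V - {v}) E)"

definition hypo_unique_domination :: "'a set \<Rightarrow> ('a \<Rightarrow> 'a \<Rightarrow> bool) \<Rightarrow> bool" where
  "hypo_unique_domination V E \<longleftrightarrow>
     (\<exists>D1 D2. gamma_set V E D1 \<and> gamma_set V E D2 \<and> D1 \<noteq> D2) \<and>
     (\<forall>v\<in>V. \<exists>!D. gamma_set (V - {v}) E D)"

end

theory Submission
  imports Defs
begin

lemma dcount:
  assumes "finite A" "finite B"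
  shows "(\<Sum>a\<in>A. card {b\<in>B. P a b}) = (\<Sum>b\<in>B. card {a\<in>A. P a b})"
proof -
  have 1: "\<And>a. card {b\<in>B. P a b} = (\<Sum>b\<in>B. if P a b then 1 else 0)"
    using assms(2) by (simp add: sum.inter_filter[symmetric])
  have 2: "\<And>b. card {a\<in>A. P a b} = (\<Sum>a\<in>A. if P a b then 1 else 0)"
    using assms(1) by (simp add: sum.inter_filter[symmetric])
  have "(\<Sum>a\<in>A. card {b\<in>B. P a b}) = (\<Sum>a\<in>A. \<Sum>b\<in>B. if P a b then 1 else 0)"
    by (simp only: 1)
  also have "\<dots> = (\<Sum>b\<in>B. \<Sum>a\<in>A. if P a b then 1 else 0)"
    by (rule sum.swap)
  also have "\<dots> = (\<Sum>b\<in>B. card {a\<in>A. P a b})"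
    by (simp only: 2)
  finally show ?thesis .
qed

lemma sum_ge1_eq_card:
  fixes f :: "'b \<Rightarrow> nat"
  assumes "finite A" "\<forall>x\<in>A. f x \<ge> 1" "sum f A \<le> card A" "x \<in> A"
  shows "f x = 1"
proof (rule ccontr)
  assume "f x \<noteq> 1"
  moreover have "f x \<ge> 1" using assms(2,4) by blast
  ultimately have gt: "1 < f x" by linarith
  have "(\<Sum>y\<in>A. 1) < sum f A"
    by (rule sum_strict_mono_ex1[OF assms(1)]) (use assms(2,4) gt in blast)+
  then show False using assms(3) by simp
qed

lemma sum_le_bound_eq:
  fixes f :: "'b \<Rightarrow> nat"
  assumes "finite A" "\<forall>x\<in>A. f x \<le> c" "sum f A \<ge> card A * c" "x \<in> A"
  shows "f x = c"
proof (rule ccontr)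
  assume "f x \<noteq> c"
  moreover have "f x \<le> c" using assms(2,4) by blast
  ultimately have lt: "f x < c" by linarith
  have "sum f A < (\<Sum>y\<in>A. c)"
    by (rule sum_strict_mono_ex1[OF assms(1)]) (use assms(2,4) lt in blast)+
  then show False using assms(3) by simp
qed

lemma dom_exists:
  assumes "finite V'"
  shows "\<exists>D. dominating V' E D \<and> card D = domination_number V' E"
proof -
  have "\<exists>D. dominating V' E D \<and> card D = card V'" by (auto simp: dominating_def)
  then have "\<exists>k. \<exists>D. dominating V' E D \<and> card D = k" by blast
  then show ?thesis unfolding domination_number_def by (rule LeastI_ex)
qed

lemma dom_le:
  assumes "dominating V' E D"
  shows "domination_number V' E \<le> card D"
  unfolding domination_number_def using assms by (rule_tac Least_le) auto

context
  fixes V :: "'a set" and E :: "'a \<Rightarrow> 'a \<Rightarrow> bool"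
  assumes sg: "simple_graph V E"
    and conn: "connected_graph V E"
    and cardV: "card V = (max_degree V E + 1) * (domination_number V E - 1) + 1"
    and n4: "card V \<ge> 4"
    and crit: "vertex_domination_critical V E"
begin

lemma finV: "finite V" using sg unfolding simple_graph_def by blast
lemma symE: "E u v \<Longrightarrow> E v u" using sg unfolding simple_graph_def by blast
lemma irrE: "\<not> E v v" using sg unfolding simple_graph_def by blast

lemma memN: "x \<in> closed_nbhd V E u \<longleftrightarrow> x = u \<or> (x \<in> V \<and> E u x)"
  by (auto simp: closed_nbhd_def nbhd_def)

lemma memN_sym: "u \<in> V \<Longrightarrow> x \<in> V \<Longrightarrow> x \<in> closed_nbhd V E u \<longleftrightarrow> u \<in> closed_nbhd V E x"
  using symE by (auto simp: memN)

lemma finN: "finite (closed_nbhd V E u)"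
  using finV by (simp add: closed_nbhd_def nbhd_def)

lemma N_sub: "u \<in> V \<Longrightarrow> closed_nbhd V E u \<subseteq> V"
  by (auto simp: memN)

lemma cardN: "card (closed_nbhd V E u) = degree V E u + 1"
proof -
  have "u \<notin> nbhd V E u" using irrE by (simp add: nbhd_def)
  moreover have "finite (nbhd V E u)" using finV by (simp add: nbhd_def)
  ultimately show ?thesis by (simp add: closed_nbhd_def degree_def)
qed

lemma deg_le: "u \<in> V \<Longrightarrow> degree V E u \<le> max_degree V E"
  unfolding max_degree_def using finV by (intro Max_ge) auto

lemma gamma_ge2: "domination_number V E \<ge> 2"
proof (rule ccontr)
  assume "\<not> ?thesis"
  then have "domination_number V E - 1 = 0" by simp
  then show False using cardV n4 by simp
qed

lemma has_nb: "w \<in> V \<Longrightarrow> \<exists>y\<in>V. E w y"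
proof -
  assume w: "w \<in> V"
  have "card (V - {w}) \<ge> 3" using n4 w finV by (simp add: card_Diff_singleton)
  then have "V - {w} \<noteq> {}" by (metis card.empty not_numeral_le_zero)
  then obtain u where u: "u \<in> V" "u \<noteq> w" by blast
  let ?R = "{(x, y). x \<in> V \<and> y \<in> V \<and> E x y}"
  have "(w, u) \<in> ?R\<^sup>*" using conn w u unfolding connected_graph_def by blast
  then show ?thesis
    by (rule converse_rtranclE) (use u in auto)
qed

lemma gamma_minus: "v \<in> V \<Longrightarrow> domination_number (V - {v}) E = domination_number V E - 1"
proof -
  assume v: "v \<in> V"
  obtain D where D: "dominating (V - {v}) E D" "card D = domination_number (V - {v}) E"
    using dom_exists finV by (meson finite_Diff)
  have "dominating V E (insert v D)" using D(1) by (auto simp: dominating_def v)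
  then have "domination_number V E \<le> card (insert v D)" by (rule dom_le)
  also have "\<dots> \<le> card D + 1" by (simp add: card_insert_le_m1)
  finally have "domination_number V E \<le> domination_number (V - {v}) E + 1" using D by simp
  moreover have "domination_number (V - {v}) E < domination_number V E"
    using crit v unfolding vertex_domination_critical_def gamma_critical_vertex_def by blast
  ultimately show ?thesis by linarith
qed

lemma key:
  assumes v: "v \<in> V" and D: "gamma_set (V - {v}) E D"
  shows "D \<subseteq> V - {v}" "card D = domination_number V E - 1"
    "\<forall>u\<in>D. v \<notin> closed_nbhd V E u"
    "\<forall>x\<in>V - {v}. card (closed_nbhd V E x \<inter> D) = 1"
    "\<forall>u\<in>D. degree V E u = max_degree V E"
proof -
  have Dsub: "D \<subseteq> V - {v}" and dom: "\<forall>x\<in>V - {v} - D. \<exists>u\<in>D. E x u"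
    and cD: "card D = domination_number V E - 1"
    using D gamma_minus[OF v] by (auto simp: gamma_set_def dominating_def)
  show "D \<subseteq> V - {v}" "card D = domination_number V E - 1" by (fact Dsub, fact cD)
  have finD: "finite D" using Dsub finV by (meson finite_Diff finite_subset)
  show undom: "\<forall>u\<in>D. v \<notin> closed_nbhd V E u"
  proof (rule ccontr)
    assume "\<not> ?thesis"
    then obtain u where u: "u \<in> D" "v \<in> closed_nbhd V E u" by blast
    then have "u \<noteq> v" using Dsub by blast
    then have "E u v" using u by (simp add: memN)
    then have Evu: "E v u" by (rule symE)
    have "dominating V E D"
      unfolding dominating_def
    proof
      show "D \<subseteq> V" using Dsub by blast
      show "\<forall>x\<in>V - D. \<exists>u\<in>D. E x u"
      proof
        fix x assume x: "x \<in> V - D"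
        show "\<exists>u\<in>D. E x u"
        proof (cases "x = v")
          case True then show ?thesis using Evu u(1) by blast
        next
          case False then show ?thesis using dom x by blast
        qed
      qed
    qed
    then have "domination_number V E \<le> card D" by (rule dom_le)
    then show False using cD gamma_ge2 by linarith
  qed
  have Nsub: "\<And>u. u \<in> D \<Longrightarrow> closed_nbhd V E u \<subseteq> V - {v}"
    using N_sub undom Dsub by blast
  have c1: "\<forall>x\<in>V - {v}. card (closed_nbhd V E x \<inter> D) \<ge> 1"
  proof
    fix x assume x: "x \<in> V - {v}"
    have "closed_nbhd V E x \<inter> D \<noteq> {}"
    proof (cases "x \<in> D")
      case True then show ?thesis by (auto simp: memN)
    next
      case False
      then obtain u where u: "u \<in> D" "E x u" using dom x by blast
      then have "u \<in> closed_nbhd V E x \<inter> D" using Dsub by (auto simp: memN)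
      then show ?thesis by blast
    qed
    moreover have "finite (closed_nbhd V E x \<inter> D)" using finD by blast
    ultimately show "card (closed_nbhd V E x \<inter> D) \<ge> 1"
      by (simp add: Suc_le_eq card_gt_0_iff)
  qed
  have finW: "finite (V - {v})" using finV by blast
  have dc: "(\<Sum>u\<in>D. card {x\<in>V - {v}. x \<in> closed_nbhd V E u})
      = (\<Sum>x\<in>V - {v}. card {u\<in>D. x \<in> closed_nbhd V E u})"
    by (rule dcount[OF finD finW])
  have e1: "\<And>u. u \<in> D \<Longrightarrow> {x\<in>V - {v}. x \<in> closed_nbhd V E u} = closed_nbhd V E u"
    using Nsub by blast
  have e2: "\<And>x. x \<in> V - {v} \<Longrightarrow> {u\<in>D. x \<in> closed_nbhd V E u} = closed_nbhd V E x \<inter> D"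
  proof -
    fix x assume x: "x \<in> V - {v}"
    show "{u\<in>D. x \<in> closed_nbhd V E u} = closed_nbhd V E x \<inter> D"
      using memN_sym[of _ x] x Dsub by blast
  qed
  have S: "(\<Sum>u\<in>D. card (closed_nbhd V E u)) = (\<Sum>x\<in>V - {v}. card (closed_nbhd V E x \<inter> D))"
  proof -
    have "(\<Sum>u\<in>D. card (closed_nbhd V E u)) = (\<Sum>u\<in>D. card {x\<in>V - {v}. x \<in> closed_nbhd V E u})"
      by (rule sum.cong[OF refl]) (metis e1)
    also have "\<dots> = (\<Sum>x\<in>V - {v}. card {u\<in>D. x \<in> closed_nbhd V E u})" by (fact dc)
    also have "\<dots> = (\<Sum>x\<in>V - {v}. card (closed_nbhd V E x \<inter> D))"
      by (rule sum.cong[OF refl]) (metis e2)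
    finally show ?thesis .
  qed
  have cW: "card (V - {v}) = card V - 1" using v finV by (simp add: card_Diff_singleton)
  have lo: "card (V - {v}) \<le> (\<Sum>x\<in>V - {v}. card (closed_nbhd V E x \<inter> D))"
  proof -
    have "card (V - {v}) = (\<Sum>x\<in>V - {v}. 1)" by simp
    also have "\<dots> \<le> (\<Sum>x\<in>V - {v}. card (closed_nbhd V E x \<inter> D))"
      by (rule sum_mono) (use c1 in blast)
    finally show ?thesis .
  qed
  have bnd: "\<forall>u\<in>D. card (closed_nbhd V E u) \<le> max_degree V E + 1"
    using cardN deg_le Dsub by (simp add: subset_iff)
  have hi: "(\<Sum>u\<in>D. card (closed_nbhd V E u)) \<le> card D * (max_degree V E + 1)"
  proof -
    have "(\<Sum>u\<in>D. card (closed_nbhd V E u)) \<le> (\<Sum>u\<in>D. max_degree V E + 1)"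
      by (rule sum_mono) (use bnd in blast)
    then show ?thesis by simp
  qed
  have eqn: "card D * (max_degree V E + 1) = card (V - {v})"
    using cD cW cardV by (simp add: mult.commute)
  show "\<forall>x\<in>V - {v}. card (closed_nbhd V E x \<inter> D) = 1"
  proof
    fix x assume x: "x \<in> V - {v}"
    have "(\<Sum>x\<in>V - {v}. card (closed_nbhd V E x \<inter> D)) \<le> card (V - {v})"
      using S hi eqn by linarith
    then show "card (closed_nbhd V E x \<inter> D) = 1"
      by (rule sum_ge1_eq_card[OF finW c1 _ x])
  qed
  show "\<forall>u\<in>D. degree V E u = max_degree V E"
  proof
    fix u assume u: "u \<in> D"
    have "card (closed_nbhd V E u) = max_degree V E + 1"
      by (rule sum_le_bound_eq[OF finD bnd _ u]) (use S lo eqn in linarith)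
    then show "degree V E u = max_degree V E" using cardN by simp
  qed
qed

lemma sum_ind_card:
  assumes "finite A"
  shows "(\<Sum>a\<in>A. if a = w then 0 else (1::nat)) = card (A - {w})"
proof (cases "w \<in> A")
  case True
  have "(\<Sum>a\<in>A. if a = w then 0 else (1::nat)) = (if w = w then 0 else 1) + (\<Sum>a\<in>A - {w}. if a = w then 0 else (1::nat))"
    by (rule sum.remove[OF assms True])
  also have "(\<Sum>a\<in>A - {w}. if a = w then 0 else (1::nat)) = (\<Sum>a\<in>A - {w}. 1)"
    by (rule sum.cong) auto
  finally show ?thesis by simp
next
  case False
  have "(\<Sum>a\<in>A. if a = w then 0 else (1::nat)) = (\<Sum>a\<in>A. 1)"
    by (rule sum.cong) (use False in auto)
  then show ?thesis using False by simp
qed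

lemma symD:
  assumes v: "v \<in> V" and w: "w \<in> V"
    and D1: "gamma_set (V - {v}) E D1" and D2: "gamma_set (V - {w}) E D2"
  shows "w \<in> D1 \<longleftrightarrow> v \<in> D2"
proof -
  note k1 = key[OF v D1] and k2 = key[OF w D2]
  have fin1: "finite D1" using k1(1) finV by (meson finite_Diff finite_subset)
  have fin2: "finite D2" using k2(1) finV by (meson finite_Diff finite_subset)
  have dc: "(\<Sum>a\<in>D1. card {b\<in>D2. b \<in> closed_nbhd V E a}) = (\<Sum>b\<in>D2. card {a\<in>D1. b \<in> closed_nbhd V E a})"
    by (rule dcount[OF fin1 fin2])
  have l: "(\<Sum>a\<in>D1. card {b\<in>D2. b \<in> closed_nbhd V E a}) = (\<Sum>a\<in>D1. if a = w then 0 else 1)"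
  proof (rule sum.cong)
    fix a assume a: "a \<in> D1"
    have aV: "a \<in> V" using a k1(1) by blast
    have se: "{b\<in>D2. b \<in> closed_nbhd V E a} = closed_nbhd V E a \<inter> D2" by blast
    show "card {b\<in>D2. b \<in> closed_nbhd V E a} = (if a = w then 0 else 1)"
    proof (cases "a = w")
      case True
      have emp: "closed_nbhd V E a \<inter> D2 = {}"
      proof (rule ccontr)
        assume "closed_nbhd V E a \<inter> D2 \<noteq> {}"
        then obtain b where b: "b \<in> D2" "b \<in> closed_nbhd V E a" by blast
        have "b \<in> V" using b k2(1) by blast
        then have "w \<in> closed_nbhd V E b" using memN_sym[OF aV] b True by blast
        then show False using k2(3) b by blast
      qed
      have "{b\<in>D2. b \<in> closed_nbhd V E a} = {}" by (rule trans[OF se emp])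
      then have c0: "card {b\<in>D2. b \<in> closed_nbhd V E a} = 0" by (simp only: card.empty)
      show ?thesis by (subst if_P[OF True]) (rule c0)
    next
      case False
      then show ?thesis using se k2(4) aV by simp
    qed
  qed simp
  have r: "(\<Sum>b\<in>D2. card {a\<in>D1. b \<in> closed_nbhd V E a}) = (\<Sum>b\<in>D2. if b = v then 0 else 1)"
  proof (rule sum.cong)
    fix b assume b: "b \<in> D2"
    have bV: "b \<in> V" using b k2(1) by blast
    have se: "{a\<in>D1. b \<in> closed_nbhd V E a} = closed_nbhd V E b \<inter> D1"
      using memN_sym[OF _ bV] k1(1) by blast
    show "card {a\<in>D1. b \<in> closed_nbhd V E a} = (if b = v then 0 else 1)"
    proof (cases "b = v")
      case True
      have "{a\<in>D1. b \<in> closed_nbhd V E a} = {}" using k1(3) True by blast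
      then have c0: "card {a\<in>D1. b \<in> closed_nbhd V E a} = 0" by (simp only: card.empty)
      show ?thesis by (subst if_P[OF True]) (rule c0)
    next
      case False
      then show ?thesis using se k1(4) bV by simp
    qed
  qed simp
  have "card (D1 - {w}) = card (D2 - {v})"
    using dc l r sum_ind_card[OF fin1, of w] sum_ind_card[OF fin2, of v] by simp
  moreover have "card D1 = card D2" using k1(2) k2(2) by simp
  moreover have "card D1 \<ge> 1" using k1(2) gamma_ge2 by simp
  ultimately show ?thesis by (simp add: card_Diff_singleton_if split: if_splits)
qed

lemma gamma_insert:
  assumes v: "v \<in> V" and D: "gamma_set (V - {v}) E D"
  shows "gamma_set V E (insert v D)"
proof -
  note k = key[OF v D]
  have fin: "finite D" using k(1) finV by (meson finite_Diff finite_subset)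
  have "v \<notin> D" using k(1) by blast
  then have "card (insert v D) = domination_number V E" using fin k(2) gamma_ge2 by simp
  moreover have "dominating V E (insert v D)"
    using D v unfolding gamma_set_def dominating_def by auto
  ultimately show ?thesis by (simp add: gamma_set_def)
qed

lemma main:
  "regular V E \<and> hypo_efficient_domination V E \<and> hypo_unique_domination V E"
proof -
  have "\<forall>v\<in>V. \<exists>D. gamma_set (V - {v}) E D"
  proof
    fix v assume "v \<in> V"
    have "finite (V - {v})" using finV by blast
    then show "\<exists>D. gamma_set (V - {v}) E D" using dom_exists unfolding gamma_set_def by blast
  qed
  then obtain Dof where Dof: "\<forall>v\<in>V. gamma_set (V - {v}) E (Dof v)" by metis
  have degD: "\<forall>w\<in>V. degree V E w = max_degree V E"
  proof
    fix w assume w: "w \<in> V"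
    note kw = key[OF w Dof[rule_format, OF w]]
    have "Dof w \<noteq> {}" using kw(2) gamma_ge2 by auto
    then obtain v where v: "v \<in> Dof w" by blast
    have vV: "v \<in> V" using v kw(1) by blast
    have "w \<in> Dof v" using symD[OF vV w Dof[rule_format, OF vV] Dof[rule_format, OF w]] v by blast
    then show "degree V E w = max_degree V E" using key(5)[OF vV Dof[rule_format, OF vV]] by blast
  qed
  have reg: "regular V E" using degD by (simp add: regular_def)
  obtain w0 where w0: "w0 \<in> V" using n4 by fastforce
  obtain y0 where y0: "y0 \<in> V" "E w0 y0" using has_nb[OF w0] by blast
  have "nbhd V E w0 \<noteq> {}" using y0 by (auto simp: nbhd_def)
  moreover have "finite (nbhd V E w0)" using finV by (simp add: nbhd_def)
  ultimately have "degree V E w0 \<ge> 1" by (simp add: degree_def Suc_le_eq card_gt_0_iff)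
  then have D1: "max_degree V E \<ge> 1" using degD w0 by simp
  have noEDS: "\<not> has_EDS V E"
  proof
    assume "has_EDS V E"
    then obtain D where D: "D \<subseteq> V" "\<forall>x\<in>V. card (closed_nbhd V E x \<inter> D) = 1"
      by (auto simp: has_EDS_def efficient_dominating_def)
    have fin: "finite D" using D(1) finV by (rule finite_subset)
    have "(\<Sum>x\<in>V. card {u\<in>D. x \<in> closed_nbhd V E u}) = (\<Sum>u\<in>D. card {x\<in>V. x \<in> closed_nbhd V E u})"
      by (rule dcount[OF finV fin])
    also have "(\<Sum>x\<in>V. card {u\<in>D. x \<in> closed_nbhd V E u}) = (\<Sum>x\<in>V. 1)"
    proof (rule sum.cong)
      fix x assume x: "x \<in> V"
      have "{u\<in>D. x \<in> closed_nbhd V E u} = closed_nbhd V E x \<inter> D"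
        using memN_sym[OF _ x] D(1) by blast
      then show "card {u\<in>D. x \<in> closed_nbhd V E u} = 1" using D(2) x by simp
    qed simp
    also have "(\<Sum>u\<in>D. card {x\<in>V. x \<in> closed_nbhd V E u}) = (\<Sum>u\<in>D. max_degree V E + 1)"
    proof (rule sum.cong)
      fix u assume u: "u \<in> D"
      have uV: "u \<in> V" using u D(1) by blast
      have "{x\<in>V. x \<in> closed_nbhd V E u} = closed_nbhd V E u" using N_sub[OF uV] by blast
      then show "card {x\<in>V. x \<in> closed_nbhd V E u} = max_degree V E + 1"
        using cardN degD uV by simp
    qed simp
    finally have eq: "card V = card D * (max_degree V E + 1)" by simp
    define d where "d = max_degree V E + 1"
    define m where "m = domination_number V E - 1"
    define k where "k = card D"
    have e: "d * m + 1 = k * d" using eq cardV unfolding d_def m_def k_def by simp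
    have d2: "d \<ge> 2" using D1 d_def by simp
    show False
    proof (cases "k \<le> m")
      case True
      then have "k * d \<le> m * d" by (rule mult_le_mono1)
      moreover have "d * m = m * d" by (rule mult.commute)
      ultimately show False using e by linarith
    next
      case False
      then have "Suc m \<le> k" by simp
      then have "Suc m * d \<le> k * d" by (rule mult_le_mono1)
      moreover have "Suc m * d = d * m + d" by simp
      ultimately show False using e d2 by linarith
    qed
  qed
  have EDSv: "\<forall>v\<in>V. has_EDS (V - {v}) E"
  proof
    fix v assume v: "v \<in> V"
    note k = key[OF v Dof[rule_format, OF v]]
    have "efficient_dominating (V - {v}) E (Dof v)"
      unfolding efficient_dominating_def
    proof
      show "Dof v \<subseteq> V - {v}" by (fact k(1))
      show "\<forall>x\<in>V - {v}. card (closed_nbhd (V - {v}) E x \<inter> Dof v) = 1"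
      proof
        fix x assume x: "x \<in> V - {v}"
        have "closed_nbhd (V - {v}) E x \<inter> Dof v = closed_nbhd V E x \<inter> Dof v"
          using k(1) by (auto simp: closed_nbhd_def nbhd_def)
        then show "card (closed_nbhd (V - {v}) E x \<inter> Dof v) = 1" using k(4) x by simp
      qed
    qed
    then show "has_EDS (V - {v}) E" by (auto simp: has_EDS_def)
  qed
  have two: "\<exists>D1 D2. gamma_set V E D1 \<and> gamma_set V E D2 \<and> D1 \<noteq> D2"
  proof -
    have g1: "gamma_set V E (insert w0 (Dof w0))" by (rule gamma_insert[OF w0 Dof[rule_format, OF w0]])
    have g2: "gamma_set V E (insert y0 (Dof y0))" by (rule gamma_insert[OF y0(1) Dof[rule_format, OF y0(1)]])
    have "w0 \<noteq> y0" using y0(2) irrE by blast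
    moreover have "y0 \<in> closed_nbhd V E w0" using y0 by (simp add: memN)
    then have "w0 \<notin> Dof y0" using key(3)[OF y0(1) Dof[rule_format, OF y0(1)]] by blast
    ultimately have "insert w0 (Dof w0) \<noteq> insert y0 (Dof y0)" by blast
    then show ?thesis using g1 g2 by blast
  qed
  have uniq: "\<forall>v\<in>V. \<exists>!D. gamma_set (V - {v}) E D"
  proof
    fix v assume v: "v \<in> V"
    show "\<exists>!D. gamma_set (V - {v}) E D"
    proof (rule ex_ex1I)
      show "\<exists>D. gamma_set (V - {v}) E D" using Dof v by blast
    next
      fix D D' assume D: "gamma_set (V - {v}) E D" and D': "gamma_set (V - {v}) E D'"
      have s1: "D \<subseteq> V - {v}" by (rule key(1)[OF v D])
      have s2: "D' \<subseteq> V - {v}" by (rule key(1)[OF v D'])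
      show "D = D'"
      proof (rule set_eqI)
        fix x
        show "x \<in> D \<longleftrightarrow> x \<in> D'"
        proof (cases "x \<in> V - {v}")
          case True
          then have xV: "x \<in> V" by blast
          have a: "x \<in> D \<longleftrightarrow> v \<in> Dof x" by (rule symD[OF v xV D Dof[rule_format, OF xV]])
          have b: "x \<in> D' \<longleftrightarrow> v \<in> Dof x" by (rule symD[OF v xV D' Dof[rule_format, OF xV]])
          show ?thesis using a b by blast
        next
          case False then show ?thesis using s1 s2 by blast
        qed
      qed
    qed
  qed
  show ?thesis using reg noEDS EDSv two uniq
    by (simp add: hypo_efficient_domination_def hypo_unique_domination_def)
qed

end

theorem theorem3p18:
  fixes V :: "'a set" and E :: "'a \<Rightarrow> 'a \<Rightarrow> bool"
  assumes "simple_graph V E"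
    and "connected_graph V E"
    and "card V = (max_degree V E + 1) * (domination_number V E - 1) + 1"
    and "card V \<ge> 4"
    and "vertex_domination_critical V E"
  shows "regular V E \<and> hypo_efficient_domination V E \<and> hypo_unique_domination V E"
  by (rule main[OF assms])

end
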